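(* Let $n\ge 3$ and let $K$ be a proper $4$-coloring of $H_2(n,n-1)$. (1) If $T(K)=\{(x,y): x+y\in\{f_i,f_j\}\}$ for some $1\le i<j\le n$, then $K$ is the $(i,j)$-coordinate coloring (up to renaming of colors), i.e. its color classes are the four sets $\{x\in\mathbb{Z}_2^n: (x_i,x_j)=(a,b)\}$, $a,b\in\mathbb{Z}_2$. (2) If $T(K)=\{(x,y): x+y\in\{\mathbb{1},f_j\}\}$ for some $j\in\{1,\dots,n\}$, then $n$ is even and the color classes of $K$ are the four sets $\mathcal{A}^{\nu}_{\mu}=\{v\in\mathbb{Z}_2^n: \mathrm{wt}(v)\equiv \nu \pmod 2,\ v_j=\mu\}$, $\nu,\mu\in\{0,1\}$. As a consequence, every proper $4$-coloring $K$ of $H_2(n,n-1)$ with $\mathrm{rb}(K)=\frac{2}{n+1}$ is even.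
   Context: $H_2(n,n-1)$ is the simple undirected graph with vertex set $\mathbb{Z}_2^n$ in which $x,y$ are adjacent iff their Hamming distance is at least $n-1$; $\mathrm{wt}$ is Hamming weight. $e_k$ is the $k$-th standard basis vector, $\mathbb{1}$ the all-ones vector, $f_k=e_k+\mathbb{1}$. For a proper $k$-coloring $K$ of a simple graph $G=(V,E)$, an edge $(x,y)$ is a transition edge if swapping the colors of $x$ and $y$ (all other colors unchanged) yields again a proper $k$-coloring; $T(K)$ is the set of transition edges and $\mathrm{rb}(K)=|T(K)|/|E|$. A coloring is even if all color classes have the same cardinality. *)

theory Defs
  imports Complex_Main
begin

text \<open>Vectors of Z_2^n are encoded as subsets of {..<n} (support sets);
  coordinates are indexed 0..n-1. Addition is symmetric difference,
  Hamming weight is cardinality.\<close>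

definition Vn :: "nat \<Rightarrow> nat set set" where
  "Vn n = Pow {..<n}"

definition vadd :: "nat set \<Rightarrow> nat set \<Rightarrow> nat set" where
  "vadd x y = (x - y) \<union> (y - x)"

definition wt :: "nat set \<Rightarrow> nat" where
  "wt x = card x"

definition hdist :: "nat set \<Rightarrow> nat set \<Rightarrow> nat" where
  "hdist x y = wt (vadd x y)"

definition ones :: "nat \<Rightarrow> nat set" where
  "ones n = {..<n}"

definition evec :: "nat \<Rightarrow> nat set" where
  "evec k = {k}"

definition fvec :: "nat \<Rightarrow> nat \<Rightarrow> nat set" where
  "fvec n k = vadd (evec k) (ones n)"

text \<open>Edges of H_2(n,n-1), as ordered pairs (both orientations).\<close>
definition edges :: "nat \<Rightarrow> (nat set \<times> nat set) set" where
  "edges n = {(x, y). x \<in> Vn n \<and> y \<in> Vn n \<and> x \<noteq> y \<and> hdist x y \<ge> n - 1}"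

definition proper_coloring :: "nat \<Rightarrow> nat \<Rightarrow> (nat set \<Rightarrow> nat) \<Rightarrow> bool" where
  "proper_coloring n k K \<longleftrightarrow>
     (\<forall>x\<in>Vn n. K x < k) \<and> (\<forall>(x, y)\<in>edges n. K x \<noteq> K y)"

definition swap_col :: "(nat set \<Rightarrow> nat) \<Rightarrow> nat set \<Rightarrow> nat set \<Rightarrow> (nat set \<Rightarrow> nat)" where
  "swap_col K x y = K(x := K y, y := K x)"

definition transition_edges :: "nat \<Rightarrow> nat \<Rightarrow> (nat set \<Rightarrow> nat) \<Rightarrow> (nat set \<times> nat set) set" where
  "transition_edges n k K = {(x, y) \<in> edges n. proper_coloring n k (swap_col K x y)}"

definition rb :: "nat \<Rightarrow> nat \<Rightarrow> (nat set \<Rightarrow> nat) \<Rightarrow> real" where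
  "rb n k K = real (card (transition_edges n k K)) / real (card (edges n))"

definition color_class :: "nat \<Rightarrow> (nat set \<Rightarrow> nat) \<Rightarrow> nat \<Rightarrow> nat set set" where
  "color_class n K c = {x \<in> Vn n. K x = c}"

definition color_classes :: "nat \<Rightarrow> nat \<Rightarrow> (nat set \<Rightarrow> nat) \<Rightarrow> nat set set set" where
  "color_classes n k K = {color_class n K c | c. c < k}"

definition even_coloring :: "nat \<Rightarrow> nat \<Rightarrow> (nat set \<Rightarrow> nat) \<Rightarrow> bool" where
  "even_coloring n k K \<longleftrightarrow>
     (\<forall>c<k. \<forall>d<k. card (color_class n K c) = card (color_class n K d))"

end

theory Submission
  imports Defs
begin


definition Sset :: "nat \<Rightarrow> nat set set" where
  "Sset n = insert (ones n) (fvec n ` {..<n})"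

lemma vadd_comm: "vadd x y = vadd y x" by (auto simp: vadd_def)
lemma vadd_assoc: "vadd (vadd x y) z = vadd x (vadd y z)" by (auto simp: vadd_def)
lemma vadd_cancel[simp]: "vadd x (vadd x y) = y" by (auto simp: vadd_def)
lemma vadd_cancel2[simp]: "vadd (vadd x y) y = x" by (auto simp: vadd_def)
lemma vadd_empty[simp]: "vadd x {} = x" "vadd {} x = x" by (auto simp: vadd_def)
lemma vadd_self[simp]: "vadd x x = {}" by (auto simp: vadd_def)
lemma mem_vadd: "k \<in> vadd x y \<longleftrightarrow> (k \<in> x \<longleftrightarrow> k \<notin> y)" by (auto simp: vadd_def)
lemma vadd_Vn: "x \<in> Vn n \<Longrightarrow> y \<in> Vn n \<Longrightarrow> vadd x y \<in> Vn n"
  by (auto simp: vadd_def Vn_def)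
lemma vadd_inj: "vadd x y = vadd x z \<longleftrightarrow> y = z"
  by (metis vadd_cancel)
lemma fvec_eq: "k < n \<Longrightarrow> fvec n k = {..<n} - {k}"
  by (auto simp: fvec_def vadd_def evec_def ones_def)
lemma Vn_finite: "x \<in> Vn n \<Longrightarrow> finite x"
  by (auto simp: Vn_def intro: finite_subset)
lemma Sset_Vn: "s \<in> Sset n \<Longrightarrow> s \<in> Vn n"
  by (auto simp: Sset_def Vn_def ones_def fvec_eq)
lemma ones_ne_fvec: "k < n \<Longrightarrow> ones n \<noteq> fvec n k"
  by (auto simp: fvec_eq ones_def)
lemma fvec_inj: "k < n \<Longrightarrow> l < n \<Longrightarrow> fvec n k = fvec n l \<longleftrightarrow> k = l"
  by (auto simp: fvec_eq)
lemma card_Sset: "card (Sset n) = n + 1"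
proof -
  have "inj_on (fvec n) {..<n}" by (auto simp: inj_on_def fvec_inj)
  moreover have "ones n \<notin> fvec n ` {..<n}" using ones_ne_fvec by auto
  ultimately show ?thesis by (simp add: Sset_def card_image)
qed
lemma finite_Sset: "finite (Sset n)" by (simp add: Sset_def)

lemma card_vadd: "finite x \<Longrightarrow> finite y \<Longrightarrow> card (vadd x y) + 2 * card (x \<inter> y) = card x + card y"
proof -
  assume f: "finite x" "finite y"
  have 1: "card x = card (x - y) + card (x \<inter> y)"
    using f by (metis Int_Diff_disjoint Un_Diff_Int card_Un_disjoint finite_Diff finite_Int inf_commute)
  have 2: "card y = card (y - x) + card (x \<inter> y)"
    using f by (metis Int_Diff_disjoint Un_Diff_Int card_Un_disjoint finite_Diff finite_Int inf_commute)
  have 3: "card (vadd x y) = card (x - y) + card (y - x)"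
    unfolding vadd_def using f by (intro card_Un_disjoint) auto
  show ?thesis using 1 2 3 by simp
qed


lemma edges_iff:
  assumes "n \<ge> 2"
  shows "(x, y) \<in> edges n \<longleftrightarrow> x \<in> Vn n \<and> y \<in> Vn n \<and> vadd x y \<in> Sset n"
proof
  assume e: "(x, y) \<in> edges n"
  hence xy: "x \<in> Vn n" "y \<in> Vn n" and c: "card (vadd x y) \<ge> n - 1"
    by (auto simp: edges_def hdist_def wt_def)
  have sub: "vadd x y \<subseteq> {..<n}" using vadd_Vn[OF xy] by (simp add: Vn_def)
  show "x \<in> Vn n \<and> y \<in> Vn n \<and> vadd x y \<in> Sset n"
  proof (cases "vadd x y = {..<n}")
    case True thus ?thesis using xy by (simp add: Sset_def ones_def)
  next
    case False
    then obtain k where k: "k < n" "k \<notin> vadd x y" using sub by blast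
    hence s2: "vadd x y \<subseteq> {..<n} - {k}" using sub by blast
    have ck: "card ({..<n} - {k}) = n - 1" using k by simp
    have "vadd x y = {..<n} - {k}"
      by (rule card_seteq) (use s2 c ck in auto)
    hence "vadd x y = fvec n k" using fvec_eq[OF k(1)] by simp
    thus ?thesis using xy k by (simp add: Sset_def)
  qed
next
  assume h: "x \<in> Vn n \<and> y \<in> Vn n \<and> vadd x y \<in> Sset n"
  hence "vadd x y = ones n \<or> (\<exists>k<n. vadd x y = fvec n k)" by (auto simp: Sset_def)
  then consider "vadd x y = {..<n}" | k where "k < n" "vadd x y = {..<n} - {k}"
    using fvec_eq by (auto simp: ones_def)
  thus "(x, y) \<in> edges n"
  proof cases
    case 1
    have "x \<noteq> y"
    proof
      assume "x = y"
      hence "vadd x y = {}" by (simp add: vadd_def)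
      moreover have "0 \<in> {..<n}" using assms by simp
      ultimately show False using 1 by blast
    qed
    thus ?thesis using h 1 by (auto simp: edges_def hdist_def wt_def)
  next
    case (2 k)
    hence c: "card (vadd x y) = n - 1" by simp
    have "x \<noteq> y"
    proof
      assume "x = y"
      hence "vadd x y = {}" by (simp add: vadd_def)
      hence "card (vadd x y) = 0" by (simp only: card.empty)
      thus False using c assms by linarith
    qed
    thus ?thesis using h c by (auto simp: edges_def hdist_def wt_def)
  qed
qed



lemma edges_sym: "(x, y) \<in> edges n \<Longrightarrow> (y, x) \<in> edges n"
  by (auto simp: edges_def hdist_def vadd_comm)
lemma edges_irrefl: "(x, x) \<notin> edges n"
  by (auto simp: edges_def)
lemma edges_Vn: "(x, y) \<in> edges n \<Longrightarrow> x \<in> Vn n \<and> y \<in> Vn n"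
  by (auto simp: edges_def)

lemma nb_add:
  assumes "n \<ge> 2" "x \<in> Vn n" "s \<in> Sset n"
  shows "(x, vadd x s) \<in> edges n"
  using assms by (simp add: edges_iff vadd_Vn Sset_Vn)

lemma nb_obtain:
  assumes "n \<ge> 2" "(x, y) \<in> edges n"
  obtains s where "s \<in> Sset n" "y = vadd x s"
  using assms edges_iff by (metis vadd_cancel)

definition Nb :: "nat \<Rightarrow> nat set \<Rightarrow> nat set set" where
  "Nb n x = {y. (x, y) \<in> edges n}"

lemma Nb_eq:
  assumes "n \<ge> 2" "x \<in> Vn n"
  shows "Nb n x = vadd x ` Sset n"
proof
  show "Nb n x \<subseteq> vadd x ` Sset n"
    using nb_obtain[OF assms(1)] unfolding Nb_def by blast
  show "vadd x ` Sset n \<subseteq> Nb n x"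
    using nb_add[OF assms] unfolding Nb_def by blast
qed

lemma card_Nb:
  assumes "n \<ge> 2" "x \<in> Vn n"
  shows "card (Nb n x) = n + 1"
proof -
  have "inj_on (vadd x) (Sset n)" by (auto simp: inj_on_def vadd_inj)
  thus ?thesis using Nb_eq[OF assms] card_Sset by (simp add: card_image)
qed

lemma finite_Vn: "finite (Vn n)" by (simp add: Vn_def)

lemma trans_char:
  assumes "proper_coloring n 4 K"
  shows "(x, y) \<in> transition_edges n 4 K \<longleftrightarrow> (x, y) \<in> edges n \<and>
     (\<forall>z. (x, z) \<in> edges n \<longrightarrow> z \<noteq> y \<longrightarrow> K z \<noteq> K y) \<and>
     (\<forall>z. (y, z) \<in> edges n \<longrightarrow> z \<noteq> x \<longrightarrow> K z \<noteq> K x)"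
proof
  assume h: "(x, y) \<in> transition_edges n 4 K"
  hence e: "(x, y) \<in> edges n" and p: "proper_coloring n 4 (swap_col K x y)"
    by (auto simp: transition_edges_def)
  have xy: "x \<noteq> y" using e edges_irrefl by blast
  have A: "\<forall>z. (x, z) \<in> edges n \<longrightarrow> z \<noteq> y \<longrightarrow> K z \<noteq> K y"
  proof (intro allI impI)
    fix z assume "(x, z) \<in> edges n" "z \<noteq> y"
    moreover hence "z \<noteq> x" using edges_irrefl by blast
    ultimately show "K z \<noteq> K y" using p xy
      unfolding proper_coloring_def swap_col_def
      by (smt (verit, best) case_prodD fun_upd_apply)
  qed
  have B: "\<forall>z. (y, z) \<in> edges n \<longrightarrow> z \<noteq> x \<longrightarrow> K z \<noteq> K x"
  proof (intro allI impI)
    fix z assume "(y, z) \<in> edges n" "z \<noteq> x"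
    moreover hence "z \<noteq> y" using edges_irrefl by blast
    ultimately show "K z \<noteq> K x" using p xy
      unfolding proper_coloring_def swap_col_def
      by (smt (verit, best) case_prodD fun_upd_apply)
  qed
  show "(x, y) \<in> edges n \<and>
     (\<forall>z. (x, z) \<in> edges n \<longrightarrow> z \<noteq> y \<longrightarrow> K z \<noteq> K y) \<and>
     (\<forall>z. (y, z) \<in> edges n \<longrightarrow> z \<noteq> x \<longrightarrow> K z \<noteq> K x)" using e A B by blast
next
  assume h: "(x, y) \<in> edges n \<and>
     (\<forall>z. (x, z) \<in> edges n \<longrightarrow> z \<noteq> y \<longrightarrow> K z \<noteq> K y) \<and>
     (\<forall>z. (y, z) \<in> edges n \<longrightarrow> z \<noteq> x \<longrightarrow> K z \<noteq> K x)"
  hence e: "(x, y) \<in> edges n" by blast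
  have xy: "x \<noteq> y" using e edges_irrefl by blast
  have v: "x \<in> Vn n" "y \<in> Vn n" using edges_Vn[OF e] by auto
  have P1: "\<forall>v\<in>Vn n. K v < 4" "\<forall>(p, q)\<in>edges n. K p \<noteq> K q"
    using assms unfolding proper_coloring_def by auto
  have "\<forall>v\<in>Vn n. swap_col K x y v < 4"
    using P1(1) v unfolding swap_col_def by auto
  moreover have "\<forall>(p, q)\<in>edges n. swap_col K x y p \<noteq> swap_col K x y q"
  proof (clarify)
    fix p q assume pq: "(p, q) \<in> edges n" and eq: "swap_col K x y p = swap_col K x y q"
    have pq': "(q, p) \<in> edges n" using edges_sym[OF pq] .
    have npq: "p \<noteq> q" using pq edges_irrefl by blast
    have o: "K p \<noteq> K q" using P1(2) pq by blast
    have oxy: "K x \<noteq> K y" using P1(2) e by blast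
    show False
    proof (cases "p = x")
      case True
      show False
      proof (cases "q = y")
        case True thus False using \<open>p = x\<close> eq oxy xy unfolding swap_col_def by auto
      next
        case False thus False using \<open>p = x\<close> eq h pq npq xy unfolding swap_col_def by auto
      qed
    next
      case px: False
      show False
      proof (cases "p = y")
        case True
        show False
        proof (cases "q = x")
          case True thus False using \<open>p = y\<close> eq oxy xy unfolding swap_col_def by auto
        next
          case False thus False using \<open>p = y\<close> eq h pq npq xy unfolding swap_col_def by auto
        qed
      next
        case py: False
        show False
        proof (cases "q = x")
          case True thus False using px py eq h pq' xy unfolding swap_col_def by auto
        next
          case qx: False
          show False
          proof (cases "q = y")
            case True thus False using px py qx eq h pq' xy unfolding swap_col_def by auto
          next
            case False thus False using px py qx eq o unfolding swap_col_def by auto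
          qed
        qed
      qed
    qed
  qed
  ultimately have "proper_coloring n 4 (swap_col K x y)" unfolding proper_coloring_def by blast
  thus "(x, y) \<in> transition_edges n 4 K" using e unfolding transition_edges_def by blast
qed

lemma trans_sym:
  assumes "proper_coloring n 4 K" "(x, y) \<in> transition_edges n 4 K"
  shows "(y, x) \<in> transition_edges n 4 K"
  using assms trans_char[OF assms(1)] edges_sym by metis



definition Tn :: "nat \<Rightarrow> (nat set \<Rightarrow> nat) \<Rightarrow> nat set \<Rightarrow> nat set set" where
  "Tn n K x = {y. (x, y) \<in> transition_edges n 4 K}"

lemma vadd_swap: "vadd (vadd x a) b = vadd (vadd x b) a"
  by (auto simp: vadd_def)

lemma four_col:
  fixes a b c d e :: nat
  assumes "a < 4" "b < 4" "c < 4" "d < 4" "e < 4" "a \<noteq> b" "a \<noteq> c" "b \<noteq> c"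
    "d \<noteq> a" "d \<noteq> b" "d \<noteq> c" "e \<noteq> a" "e \<noteq> b" "e \<noteq> c"
  shows "d = e"
proof -
  have "a + b + c + d = 6" using assms by (auto simp: less_Suc_eq numeral_eq_Suc)
  moreover have "a + b + c + e = 6" using assms by (auto simp: less_Suc_eq numeral_eq_Suc)
  ultimately show ?thesis by simp
qed
lemma four_cover:
  fixes a b c d e :: nat
  assumes "a < 4" "b < 4" "c < 4" "d < 4" "e < 4" "a \<noteq> b" "a \<noteq> c" "b \<noteq> c"
    "d \<noteq> a" "d \<noteq> b" "d \<noteq> c"
  shows "e = a \<or> e = b \<or> e = c \<or> e = d"
  using assms by (auto simp: less_Suc_eq numeral_eq_Suc)

locale col =
  fixes n :: nat and K :: "nat set \<Rightarrow> nat"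
  assumes n3: "n \<ge> 3" and pc: "proper_coloring n 4 K"
begin

lemma n2: "n \<ge> 2" using n3 by simp

lemma T_edge: "(x, y) \<in> transition_edges n 4 K \<Longrightarrow> (x, y) \<in> edges n"
  by (simp add: transition_edges_def)

lemma uniq1: "(x, y) \<in> transition_edges n 4 K \<Longrightarrow> (x, z) \<in> edges n \<Longrightarrow> z \<noteq> y \<Longrightarrow> K z \<noteq> K y"
  using trans_char[OF pc] by blast

lemma uniq2: "(x, y) \<in> transition_edges n 4 K \<Longrightarrow> (y, z) \<in> edges n \<Longrightarrow> z \<noteq> x \<Longrightarrow> K z \<noteq> K x"
  using trans_char[OF pc] by blast

lemma pne: "(x, y) \<in> edges n \<Longrightarrow> K x \<noteq> K y"
  using pc unfolding proper_coloring_def by blast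

lemma clt: "x \<in> Vn n \<Longrightarrow> K x < 4"
  using pc unfolding proper_coloring_def by blast

lemma Tsym: "(x, y) \<in> transition_edges n 4 K \<Longrightarrow> (y, x) \<in> transition_edges n 4 K"
  using trans_sym[OF pc] .

lemma nb: "x \<in> Vn n \<Longrightarrow> s \<in> Sset n \<Longrightarrow> (x, vadd x s) \<in> edges n"
  using nb_add[OF n2] .

lemma VnS: "x \<in> Vn n \<Longrightarrow> s \<in> Sset n \<Longrightarrow> vadd x s \<in> Vn n"
  using vadd_Vn Sset_Vn by blast

lemma Tn_sub: "Tn n K x \<subseteq> Nb n x"
  by (auto simp: Tn_def Nb_def transition_edges_def)

lemma deg_le2:
  assumes x: "x \<in> Vn n"
  shows "card (Tn n K x) \<le> 2"
proof (rule ccontr)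
  assume "\<not> card (Tn n K x) \<le> 2"
  hence c3: "card (Tn n K x) \<ge> 3" by simp
  have "finite (Nb n x)" using Nb_eq[OF n2 x] finite_Sset by simp
  hence fin: "finite (Tn n K x)" using Tn_sub finite_subset by blast
  have inj: "inj_on K (Tn n K x)"
  proof (rule inj_onI)
    fix y y' assume a: "y \<in> Tn n K x" "y' \<in> Tn n K x" "K y = K y'"
    show "y = y'"
    proof (rule ccontr)
      assume "y \<noteq> y'"
      have t: "(x, y) \<in> transition_edges n 4 K" "(x, y') \<in> transition_edges n 4 K"
        using a unfolding Tn_def by auto
      show False using uniq1[OF t(1) T_edge[OF t(2)]] a(3) \<open>y \<noteq> y'\<close> by auto
    qed
  qed
  have sub: "K ` Tn n K x \<subseteq> {0..<4} - {K x}"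
  proof
    fix c assume "c \<in> K ` Tn n K x"
    then obtain y where y: "y \<in> Tn n K x" "c = K y" by blast
    hence e: "(x, y) \<in> edges n" using T_edge unfolding Tn_def by blast
    hence "K y < 4" using clt edges_Vn by blast
    thus "c \<in> {0..<4} - {K x}" using pne[OF e] y by auto
  qed
  have cK: "card ({0..<4::nat} - {K x}) = 3" using clt[OF x] by simp
  have cimg: "card (K ` Tn n K x) = card (Tn n K x)" using card_image[OF inj] .
  have "card (K ` Tn n K x) \<le> 3" using card_mono[OF _ sub] cK by simp
  hence eq3: "card (K ` Tn n K x) = 3" using c3 cimg by simp
  have img: "K ` Tn n K x = {0..<4} - {K x}"
    using card_seteq[OF _ sub] eq3 cK by simp
  have "Nb n x \<subseteq> Tn n K x"
  proof
    fix z assume z: "z \<in> Nb n x"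
    hence ez: "(x, z) \<in> edges n" by (simp add: Nb_def)
    have "K z \<in> {0..<4} - {K x}" using pne[OF ez] clt edges_Vn[OF ez] by auto
    then obtain y where y: "y \<in> Tn n K x" "K y = K z" using img by (metis imageE)
    have ty: "(x, y) \<in> transition_edges n 4 K" using y unfolding Tn_def by simp
    have "z = y" using uniq1[OF ty ez] y(2) by auto
    thus "z \<in> Tn n K x" using y by simp
  qed
  hence "card (Nb n x) \<le> card (Tn n K x)" using fin card_mono by blast
  thus False using card_Nb[OF n2 x] cimg eq3 n3 by simp
qed

lemma two_other:
  assumes "s \<in> Sset n" "t \<in> Sset n"
  obtains p1 p2 where "p1 \<in> Sset n" "p2 \<in> Sset n" "p1 \<noteq> p2" "p1 \<notin> {s, t}" "p2 \<notin> {s, t}"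
proof -
  have "card (Sset n - {s, t}) \<ge> 2"
  proof -
    have "card (Sset n) - card {s,t} \<le> card (Sset n - {s,t})"
      by (rule diff_card_le_card_Diff) simp
    moreover have "card {s, t} \<le> 2" by (simp add: card_insert_le_m1)
    ultimately show ?thesis using card_Sset n3 by simp
  qed
  then obtain A where "A \<subseteq> Sset n - {s, t}" "card A = 2"
    by (meson obtain_subset_with_card_n)
  then obtain p1 p2 where "A = {p1, p2}" "p1 \<noteq> p2" by (meson card_2_iff)
  thus ?thesis using that \<open>A \<subseteq> _\<close> by blast
qed

lemma one_other:
  assumes "s \<in> Sset n" "t \<in> Sset n" "u \<in> Sset n"
  obtains p where "p \<in> Sset n" "p \<notin> {s, t, u}"
proof -
  obtain p1 p2 where "p1 \<in> Sset n" "p2 \<in> Sset n" "p1 \<noteq> p2" "p1 \<notin> {s, t}" "p2 \<notin> {s, t}"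
    using two_other[OF assms(1,2)] by blast
  thus ?thesis using that by blast
qed

end


lemma ones_fvec: "k < n \<Longrightarrow> vadd (ones n) (fvec n k) = {k}"
  by (auto simp: fvec_eq ones_def vadd_def)

lemma ones_Sset: "ones n \<in> Sset n" by (simp add: Sset_def)
lemma fvec_Sset: "k < n \<Longrightarrow> fvec n k \<in> Sset n" by (simp add: Sset_def)

lemma connect:
  assumes step: "\<forall>x\<in>Vn n. P x \<longrightarrow> (\<forall>u\<in>Sset n. P (vadd x u))"
    and x0: "x0 \<in> Vn n" and p0: "P x0"
  shows "\<forall>x\<in>Vn n. P x"
proof -
  have main: "B \<subseteq> {..<n} \<Longrightarrow> P (vadd x0 B)" if "finite B" for B
    using that
  proof (induction B rule: finite_induct)
    case empty thus ?case using p0 by simp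
  next
    case (insert k B)
    hence k: "k < n" and IH: "P (vadd x0 B)" by auto
    have V: "vadd x0 B \<in> Vn n" using x0 insert(4) vadd_Vn[of x0 n B] by (auto simp: Vn_def)
    have P1: "P (vadd (vadd x0 B) (ones n))" using step V IH ones_Sset by blast
    have V1: "vadd (vadd x0 B) (ones n) \<in> Vn n" using V vadd_Vn Sset_Vn ones_Sset by blast
    have P2: "P (vadd (vadd (vadd x0 B) (ones n)) (fvec n k))"
      using step V1 P1 fvec_Sset[OF k] by blast
    have "vadd (vadd (vadd x0 B) (ones n)) (fvec n k) = vadd (vadd x0 B) {k}"
      using ones_fvec[OF k] by (simp add: vadd_assoc)
    also have "\<dots> = vadd x0 (insert k B)" using insert(2) by (auto simp: vadd_def)
    finally show ?case using P2 by simp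
  qed
  show ?thesis
  proof
    fix x assume x: "x \<in> Vn n"
    have "vadd x0 x \<subseteq> {..<n}" using vadd_Vn[OF x0 x] by (simp add: Vn_def)
    moreover have "finite (vadd x0 x)" using finite_subset[OF calculation] by simp
    ultimately have "P (vadd x0 (vadd x0 x))" using main by blast
    thus "P x" by simp
  qed
qed

context col begin

lemma loc:
  assumes x: "x \<in> Vn n" and s: "s \<in> Sset n" and t: "t \<in> Sset n" and st: "s \<noteq> t"
    and Tx: "Tn n K x = {vadd x s, vadd x t}"
  shows "K x \<noteq> K (vadd x s)" "K x \<noteq> K (vadd x t)" "K (vadd x s) \<noteq> K (vadd x t)"
    "K x < 4" "K (vadd x s) < 4" "K (vadd x t) < 4"
    "\<And>p. p \<in> Sset n \<Longrightarrow> p \<notin> {s, t} \<Longrightarrow> K (vadd x p) \<noteq> K x \<and> K (vadd x p) \<noteq> K (vadd x s)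
          \<and> K (vadd x p) \<noteq> K (vadd x t) \<and> K (vadd x p) < 4"
proof -
  have e1: "(x, vadd x s) \<in> transition_edges n 4 K" and e2: "(x, vadd x t) \<in> transition_edges n 4 K"
    using Tx unfolding Tn_def by auto
  have y12: "vadd x s \<noteq> vadd x t" using st by (simp add: vadd_inj)
  have E1: "(x, vadd x s) \<in> edges n" "(x, vadd x t) \<in> edges n" using T_edge e1 e2 by auto
  show "K x \<noteq> K (vadd x s)" "K x \<noteq> K (vadd x t)" using pne E1 by auto
  show "K (vadd x s) \<noteq> K (vadd x t)" using uniq1[OF e1 E1(2)] y12 by auto
  show "K x < 4" "K (vadd x s) < 4" "K (vadd x t) < 4" using clt x VnS s t by auto
  fix p assume p: "p \<in> Sset n" "p \<notin> {s, t}"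
  have ep: "(x, vadd x p) \<in> edges n" using nb x p(1) by blast
  have ne: "vadd x p \<noteq> vadd x s" "vadd x p \<noteq> vadd x t" using p(2) by (auto simp: vadd_inj)
  show "K (vadd x p) \<noteq> K x \<and> K (vadd x p) \<noteq> K (vadd x s)
          \<and> K (vadd x p) \<noteq> K (vadd x t) \<and> K (vadd x p) < 4"
    using pne[OF ep] uniq1[OF e1 ep ne(1)] uniq1[OF e2 ep ne(2)] clt VnS x p(1) by auto
qed

end


context col begin

lemma other_eq:
  assumes x: "x \<in> Vn n" and s: "s \<in> Sset n" and t: "t \<in> Sset n" and st: "s \<noteq> t"
    and Tx: "Tn n K x = {vadd x s, vadd x t}"
    and p: "p \<in> Sset n" "p \<notin> {s, t}" and q: "q \<in> Sset n" "q \<notin> {s, t}"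
  shows "K (vadd x p) = K (vadd x q)"
  using loc[OF x s t st Tx] loc(7)[OF x s t st Tx p] loc(7)[OF x s t st Tx q]
    four_col[of "K x" "K (vadd x s)" "K (vadd x t)" "K (vadd x p)" "K (vadd x q)"] by auto

lemma step:
  assumes H: "\<forall>x\<in>Vn n. card (Tn n K x) = 2"
    and x: "x \<in> Vn n" and s: "s \<in> Sset n" and t: "t \<in> Sset n" and st: "s \<noteq> t"
    and Tx: "Tn n K x = {vadd x s, vadd x t}"
  shows "(\<forall>p\<in>Sset n - {s, t}. K (vadd (vadd x s) p) = K (vadd x t)) \<and>
         Tn n K (vadd x s) = {vadd (vadd x s) s, vadd (vadd x s) t}"
proof -
  define y1 where "y1 = vadd x s"
  define y2 where "y2 = vadd x t"
  note L = loc[OF x s t st Tx, folded y1_def y2_def]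
  have e1: "(x, y1) \<in> transition_edges n 4 K" using Tx unfolding Tn_def y1_def by auto
  have y1V: "y1 \<in> Vn n" "y2 \<in> Vn n" unfolding y1_def y2_def using VnS[OF x s] VnS[OF x t] by auto
  obtain p0 where p0': "p0 \<in> Sset n" "p0 \<notin> {s, t, s}" by (rule one_other[OF s t s])
  have p0: "p0 \<in> Sset n" "p0 \<notin> {s, t}" using p0' by auto
  define c where "c = K (vadd x p0)"
  note Lp0 = L(7)[OF p0, folded c_def]
  have oth: "K (vadd x p) = c" if "p \<in> Sset n" "p \<notin> {s, t}" for p
    unfolding c_def using other_eq[OF x s t st Tx that p0] .
  have x_eq: "vadd y1 s = x" by (simp add: y1_def vadd_assoc)
  have i: "K (vadd y1 p) = K y2" if p: "p \<in> Sset n" "p \<notin> {s, t}" for p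
  proof -
    define w where "w = vadd y1 p"
    have ew: "(y1, w) \<in> edges n" using nb y1V(1) p(1) w_def by blast
    have wx: "w \<noteq> x" using p(2) x_eq by (auto simp: w_def vadd_inj)
    have 1: "K w \<noteq> K x" using uniq2[OF e1 ew wx] .
    have 2: "K w \<noteq> K y1" using pne[OF ew] by auto
    have "w = vadd (vadd x p) s" by (simp add: w_def y1_def vadd_swap)
    hence "(vadd x p, w) \<in> edges n" using nb VnS x p(1) s by blast
    hence "K (vadd x p) \<noteq> K w" by (rule pne)
    hence 3: "K w \<noteq> c" using oth[OF p] by simp
    have 4: "K w < 4" using clt edges_Vn[OF ew] by blast
    have "K w = K y2"
      by (rule four_col[of "K x" "K y1" c]) (use 1 2 3 4 L(1-6) Lp0 in auto)
    thus ?thesis by (simp add: w_def)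
  qed
  define w' where "w' = vadd y1 t"
  have ew': "(y1, w') \<in> edges n" using nb y1V(1) t w'_def by blast
  have w'x: "w' \<noteq> x" using st x_eq by (auto simp: w'_def vadd_inj)
  have ii: "K w' = c"
  proof -
    have 1: "K w' \<noteq> K x" using uniq2[OF e1 ew' w'x] .
    have 2: "K w' \<noteq> K y1" using pne[OF ew'] by auto
    have "w' = vadd y2 s" by (simp add: w'_def y1_def y2_def vadd_swap)
    hence "(y2, w') \<in> edges n" using nb y1V(2) s by blast
    hence "K y2 \<noteq> K w'" by (rule pne)
    hence 3: "K w' \<noteq> K y2" by simp
    have 4: "K w' < 4" using clt edges_Vn[OF ew'] by blast
    show ?thesis
      by (rule four_col[of "K x" "K y1" "K y2"]) (use 1 2 3 4 L(1-6) Lp0 in auto)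
  qed
  obtain p1 p2 where pp: "p1 \<in> Sset n" "p2 \<in> Sset n" "p1 \<noteq> p2" "p1 \<notin> {s, t}" "p2 \<notin> {s, t}"
    by (rule two_other[OF s t])
  have sub: "Tn n K y1 \<subseteq> {x, w'}"
  proof
    fix q assume qT: "q \<in> Tn n K y1"
    hence eq: "(y1, q) \<in> transition_edges n 4 K" by (simp add: Tn_def)
    have Eq: "(y1, q) \<in> edges n" using T_edge[OF eq] .
    show "q \<in> {x, w'}"
    proof (cases "q = x")
      case True thus ?thesis by simp
    next
      case False
      have ey1x: "(y1, x) \<in> edges n" using edges_sym[OF T_edge[OF e1]] .
      have 1: "K q \<noteq> K x" using uniq1[OF eq ey1x False[symmetric]] by auto
      have 2: "K q \<noteq> K y1" using pne[OF Eq] by auto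
      have 3: "K q \<noteq> K y2"
      proof
        assume kq: "K q = K y2"
        have "vadd y1 p1 = q"
        proof (rule ccontr)
          assume "vadd y1 p1 \<noteq> q"
          thus False using uniq1[OF eq nb[OF y1V(1) pp(1)]] i[OF pp(1) pp(4)] kq by auto
        qed
        moreover have "vadd y1 p2 = q"
        proof (rule ccontr)
          assume "vadd y1 p2 \<noteq> q"
          thus False using uniq1[OF eq nb[OF y1V(1) pp(2)]] i[OF pp(2) pp(5)] kq by auto
        qed
        ultimately show False using pp(3) vadd_inj by metis
      qed
      have 4: "K q < 4" using clt edges_Vn[OF Eq] by blast
      have kc: "K q = c"
        by (rule four_col[of "K x" "K y1" "K y2"]) (use 1 2 3 4 L(1-6) Lp0 in auto)
      have "w' = q"
      proof (rule ccontr)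
        assume "w' \<noteq> q"
        thus False using uniq1[OF eq ew'] ii kc by auto
      qed
      thus ?thesis by simp
    qed
  qed
  have c2: "card {x, w'} = 2" using w'x by simp
  have "Tn n K y1 = {x, w'}"
    using card_seteq[OF _ sub] c2 H y1V(1) by simp
  hence "Tn n K y1 = {vadd y1 s, vadd y1 t}" using x_eq w'_def by simp
  thus ?thesis using i unfolding y1_def y2_def by auto
qed

end


context col begin

lemma prop_step:
  assumes H: "\<forall>x\<in>Vn n. card (Tn n K x) = 2"
    and x: "x \<in> Vn n" and s: "s \<in> Sset n" and t: "t \<in> Sset n" and st: "s \<noteq> t"
    and Tx: "Tn n K x = {vadd x s, vadd x t}" and u: "u \<in> Sset n"
  shows "Tn n K (vadd x u) = {vadd (vadd x u) s, vadd (vadd x u) t}"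
proof -
  have Tx': "Tn n K x = {vadd x t, vadd x s}" using Tx by auto
  have ts: "t \<noteq> s" using st by simp
  note S1 = step[OF H x s t st Tx]
  note S2 = step[OF H x t s ts Tx']
  show ?thesis
  proof (cases "u = s")
    case True thus ?thesis using S1 by simp
  next
    case us: False
    show ?thesis
    proof (cases "u = t")
      case True thus ?thesis using S2 by auto
    next
      case ut: False
      have uo: "u \<notin> {s, t}" using us ut by simp
      define z where "z = vadd x u"
      note L = loc[OF x s t st Tx]
      have Lu: "K z \<noteq> K x" "K z \<noteq> K (vadd x s)" "K z \<noteq> K (vadd x t)" "K z < 4"
        using L(7)[OF u uo] unfolding z_def by auto
      have zV: "z \<in> Vn n" unfolding z_def using VnS[OF x u] .
      have exz: "(x, z) \<in> edges n" unfolding z_def using nb[OF x u] .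
      have zs: "K (vadd z s) = K (vadd x t)"
      proof -
        have "vadd z s = vadd (vadd x s) u" by (simp add: z_def vadd_swap)
        thus ?thesis using S1 u uo by auto
      qed
      have zt: "K (vadd z t) = K (vadd x s)"
      proof -
        have "vadd z t = vadd (vadd x t) u" by (simp add: z_def vadd_swap)
        thus ?thesis using S2 u uo by auto
      qed
      have xnot: "x \<notin> Tn n K z"
      proof
        assume "x \<in> Tn n K z"
        hence tz: "(x, z) \<in> transition_edges n 4 K" using Tsym by (simp add: Tn_def)
        obtain p' where p'': "p' \<in> Sset n" "p' \<notin> {s, t, u}" by (rule one_other[OF s t u])
        have p': "p' \<notin> {s, t}" "p' \<noteq> u" using p'' by auto
        have e': "(x, vadd x p') \<in> edges n" using nb[OF x p''(1)] .
        have ne: "vadd x p' \<noteq> z" using p'(2) by (simp add: z_def vadd_inj)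
        have "K (vadd x p') = K z" unfolding z_def using other_eq[OF x s t st Tx p''(1) p'(1) u uo] .
        thus False using uniq1[OF tz e' ne] by simp
      qed
      have sub: "Tn n K z \<subseteq> {vadd z s, vadd z t}"
      proof
        fix q assume qT: "q \<in> Tn n K z"
        hence eq: "(z, q) \<in> transition_edges n 4 K" by (simp add: Tn_def)
        have Eq: "(z, q) \<in> edges n" using T_edge[OF eq] .
        have qx: "x \<noteq> q" using xnot qT by auto
        have 1: "K x \<noteq> K q" using uniq1[OF eq edges_sym[OF exz] qx] .
        have 2: "K z \<noteq> K q" using pne[OF Eq] .
        have 4: "K q < 4" using clt edges_Vn[OF Eq] by blast
        have cov: "K q = K x \<or> K q = K (vadd x s) \<or> K q = K (vadd x t) \<or> K q = K z"
          by (rule four_cover) (use L(1-6) Lu 4 in auto)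
        show "q \<in> {vadd z s, vadd z t}"
        proof (cases "K q = K (vadd x t)")
          case True
          have "vadd z s = q"
          proof (rule ccontr)
            assume "vadd z s \<noteq> q"
            thus False using uniq1[OF eq nb[OF zV s]] zs True by simp
          qed
          thus ?thesis by simp
        next
          case False
          hence kq: "K q = K (vadd x s)" using cov 1 2 by auto
          have "vadd z t = q"
          proof (rule ccontr)
            assume "vadd z t \<noteq> q"
            thus False using uniq1[OF eq nb[OF zV t]] zt kq by simp
          qed
          thus ?thesis by simp
        qed
      qed
      have c2: "card {vadd z s, vadd z t} = 2" using st by (simp add: vadd_inj)
      have "Tn n K z = {vadd z s, vadd z t}"
        using card_seteq[OF _ sub] c2 H zV by simp
      thus ?thesis unfolding z_def .
    qed
  qed
qed

lemma const_T:
  assumes H: "\<forall>x\<in>Vn n. card (Tn n K x) = 2"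
    and x0: "x0 \<in> Vn n" and s: "s \<in> Sset n" and t: "t \<in> Sset n" and st: "s \<noteq> t"
    and Tx: "Tn n K x0 = {vadd x0 s, vadd x0 t}"
  shows "\<forall>x\<in>Vn n. Tn n K x = {vadd x s, vadd x t}"
proof -
  have st1: "\<forall>x\<in>Vn n. Tn n K x = {vadd x s, vadd x t} \<longrightarrow>
          (\<forall>u\<in>Sset n. Tn n K (vadd x u) = {vadd (vadd x u) s, vadd (vadd x u) t})"
  proof (intro ballI impI)
    fix x u assume a: "x \<in> Vn n" "Tn n K x = {vadd x s, vadd x t}" "u \<in> Sset n"
    show "Tn n K (vadd x u) = {vadd (vadd x u) s, vadd (vadd x u) t}"
      by (rule prop_step[OF H a(1) s t st a(2) a(3)])
  qed
  show ?thesis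
    by (rule connect[where P="\<lambda>x. Tn n K x = {vadd x s, vadd x t}", OF st1 x0]) (use Tx in simp)
qed

end


lemma card_vadd_mod: "finite x \<Longrightarrow> finite v \<Longrightarrow> card (vadd x v) mod 2 = (card x + card v) mod 2"
  using card_vadd[of x v] by presburger

lemma card_ones: "card (ones n) = n" by (simp add: ones_def)
lemma card_fvec: "k < n \<Longrightarrow> card (fvec n k) = n - 1" by (simp add: fvec_eq)

context col begin

lemma loc':
  assumes x: "x \<in> Vn n" and s: "s \<in> Sset n" and t: "t \<in> Sset n" and st: "s \<noteq> t"
    and e1: "(x, vadd x s) \<in> transition_edges n 4 K" and e2: "(x, vadd x t) \<in> transition_edges n 4 K"
  shows "K x \<noteq> K (vadd x s)" "K x \<noteq> K (vadd x t)" "K (vadd x s) \<noteq> K (vadd x t)"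
    "K x < 4" "K (vadd x s) < 4" "K (vadd x t) < 4"
    "\<And>p. p \<in> Sset n \<Longrightarrow> p \<notin> {s, t} \<Longrightarrow> K (vadd x p) \<noteq> K x \<and> K (vadd x p) \<noteq> K (vadd x s)
          \<and> K (vadd x p) \<noteq> K (vadd x t) \<and> K (vadd x p) < 4"
proof -
  have y12: "vadd x s \<noteq> vadd x t" using st by (simp add: vadd_inj)
  have E1: "(x, vadd x s) \<in> edges n" "(x, vadd x t) \<in> edges n" using T_edge e1 e2 by auto
  show "K x \<noteq> K (vadd x s)" "K x \<noteq> K (vadd x t)" using pne E1 by auto
  show "K (vadd x s) \<noteq> K (vadd x t)" using uniq1[OF e1 E1(2)] y12 by auto
  show "K x < 4" "K (vadd x s) < 4" "K (vadd x t) < 4" using clt x VnS s t by auto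
  fix p assume p: "p \<in> Sset n" "p \<notin> {s, t}"
  have ep: "(x, vadd x p) \<in> edges n" using nb x p(1) by blast
  have ne: "vadd x p \<noteq> vadd x s" "vadd x p \<noteq> vadd x t" using p(2) by (auto simp: vadd_inj)
  show "K (vadd x p) \<noteq> K x \<and> K (vadd x p) \<noteq> K (vadd x s)
          \<and> K (vadd x p) \<noteq> K (vadd x t) \<and> K (vadd x p) < 4"
    using pne[OF ep] uniq1[OF e1 ep ne(1)] uniq1[OF e2 ep ne(2)] clt VnS x p(1) by auto
qed

lemma other_eq':
  assumes x: "x \<in> Vn n" and s: "s \<in> Sset n" and t: "t \<in> Sset n" and st: "s \<noteq> t"
    and e1: "(x, vadd x s) \<in> transition_edges n 4 K" and e2: "(x, vadd x t) \<in> transition_edges n 4 K"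
    and p: "p \<in> Sset n" "p \<notin> {s, t}" and q: "q \<in> Sset n" "q \<notin> {s, t}"
  shows "K (vadd x p) = K (vadd x q)"
proof -
  note L = loc'[OF x s t st e1 e2]
  show ?thesis
    by (rule four_col[of "K x" "K (vadd x s)" "K (vadd x t)"]) (use L(1-6) L(7)[OF p] L(7)[OF q] in auto)
qed

lemma case1:
  assumes i: "i < n" and j: "j < n" and ij: "i \<noteq> j"
    and H: "\<forall>x\<in>Vn n. (x, vadd x (fvec n i)) \<in> transition_edges n 4 K \<and>
                      (x, vadd x (fvec n j)) \<in> transition_edges n 4 K"
  shows "\<forall>x\<in>Vn n. \<forall>y\<in>Vn n. K x = K y \<longleftrightarrow> ((i \<in> x \<longleftrightarrow> i \<in> y) \<and> (j \<in> x \<longleftrightarrow> j \<in> y))"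
    and "\<forall>c<4. \<exists>x\<in>Vn n. K x = c"
proof -
  have si: "fvec n i \<in> Sset n" and sj: "fvec n j \<in> Sset n" using fvec_Sset i j by auto
  have sij: "fvec n i \<noteq> fvec n j" using fvec_inj[OF i j] ij by simp
  have on: "ones n \<notin> {fvec n i, fvec n j}" using ones_ne_fvec i j by auto
  have e1: "\<And>x. x \<in> Vn n \<Longrightarrow> (x, vadd x (fvec n i)) \<in> transition_edges n 4 K"
   and e2: "\<And>x. x \<in> Vn n \<Longrightarrow> (x, vadd x (fvec n j)) \<in> transition_edges n 4 K" using H by auto
  have a: "K (vadd x {k}) = K x" if x: "x \<in> Vn n" and k: "k < n" "k \<noteq> i" "k \<noteq> j" for x k
  proof -
    define x' where "x' = vadd x (ones n)"
    have x'V: "x' \<in> Vn n" using VnS[OF x ones_Sset] x'_def by simp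
    have fk: "fvec n k \<in> Sset n" "fvec n k \<notin> {fvec n i, fvec n j}" using fvec_Sset fvec_inj k i j by auto
    have "K (vadd x' (ones n)) = K (vadd x' (fvec n k))"
      using other_eq'[OF x'V si sj sij e1[OF x'V] e2[OF x'V] ones_Sset on fk] .
    moreover have "vadd x' (ones n) = x" by (simp add: x'_def vadd_assoc)
    moreover have "vadd x' (fvec n k) = vadd x {k}"
      using ones_fvec[OF k(1)] by (simp add: x'_def vadd_assoc)
    ultimately show ?thesis by simp
  qed
  have b: "B \<subseteq> {..<n} - {i, j} \<Longrightarrow> \<forall>x\<in>Vn n. K (vadd x B) = K x" if "finite B" for B
    using that
  proof (induction B rule: finite_induct)
    case empty thus ?case by simp
  next
    case (insert k B)
    show ?case
    proof
      fix x assume x: "x \<in> Vn n"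
      have xB: "vadd x B \<in> Vn n" using x insert(4) vadd_Vn[of x n B] by (auto simp: Vn_def)
      have "vadd x (insert k B) = vadd (vadd x B) {k}" using insert(2) by (auto simp: vadd_def)
      hence "K (vadd x (insert k B)) = K (vadd x B)" using a[OF xB] insert(4) by auto
      thus "K (vadd x (insert k B)) = K x" using insert(3,4) x by auto
    qed
  qed
  have bwd: "K x = K y" if x: "x \<in> Vn n" and y: "y \<in> Vn n"
     and pat: "(i \<in> x \<longleftrightarrow> i \<in> y) \<and> (j \<in> x \<longleftrightarrow> j \<in> y)" for x y
  proof -
    have sub: "vadd x y \<subseteq> {..<n} - {i, j}" using pat vadd_Vn[OF x y] by (auto simp: Vn_def vadd_def)
    have "finite (vadd x y)" using finite_subset[OF sub] by simp
    hence "K (vadd x (vadd x y)) = K x" using b sub x by blast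
    thus ?thesis by simp
  qed
  have memi: "\<And>x. i \<in> vadd x (fvec n i) \<longleftrightarrow> i \<in> x" "\<And>x. j \<in> vadd x (fvec n i) \<longleftrightarrow> j \<notin> x"
     "\<And>x. i \<in> vadd x (fvec n j) \<longleftrightarrow> i \<notin> x" "\<And>x. j \<in> vadd x (fvec n j) \<longleftrightarrow> j \<in> x"
     "\<And>x. i \<in> vadd x (ones n) \<longleftrightarrow> i \<notin> x" "\<And>x. j \<in> vadd x (ones n) \<longleftrightarrow> j \<notin> x"
    using i j ij by (auto simp: mem_vadd fvec_eq ones_def)
  show "\<forall>x\<in>Vn n. \<forall>y\<in>Vn n. K x = K y \<longleftrightarrow> ((i \<in> x \<longleftrightarrow> i \<in> y) \<and> (j \<in> x \<longleftrightarrow> j \<in> y))"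
  proof (intro ballI iffI)
    fix x y assume x: "x \<in> Vn n" and y: "y \<in> Vn n" and eq: "K x = K y"
    note Lx = loc'[OF x si sj sij e1[OF x] e2[OF x]]
    have o: "K (vadd x (ones n)) \<noteq> K x" "K (vadd x (ones n)) \<noteq> K (vadd x (fvec n i))"
        "K (vadd x (ones n)) \<noteq> K (vadd x (fvec n j))"
      using Lx(7)[OF ones_Sset on] by auto
    have V: "vadd x (fvec n i) \<in> Vn n" "vadd x (fvec n j) \<in> Vn n" "vadd x (ones n) \<in> Vn n"
      using VnS[OF x] si sj ones_Sset by auto
    show "(i \<in> x \<longleftrightarrow> i \<in> y) \<and> (j \<in> x \<longleftrightarrow> j \<in> y)"
    proof (rule ccontr)
      assume np: "\<not> ?thesis"
      consider "(i \<in> x \<longleftrightarrow> i \<in> y)" "\<not> (j \<in> x \<longleftrightarrow> j \<in> y)"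
        | "\<not> (i \<in> x \<longleftrightarrow> i \<in> y)" "(j \<in> x \<longleftrightarrow> j \<in> y)"
        | "\<not> (i \<in> x \<longleftrightarrow> i \<in> y)" "\<not> (j \<in> x \<longleftrightarrow> j \<in> y)" using np by blast
      thus False
      proof cases
        case 1
        have "K (vadd x (fvec n i)) = K y" by (rule bwd[OF V(1) y]) (use 1 memi in auto)
        thus False using Lx(1) eq by simp
      next
        case 2
        have "K (vadd x (fvec n j)) = K y" by (rule bwd[OF V(2) y]) (use 2 memi in auto)
        thus False using Lx(2) eq by simp
      next
        case 3
        have "K (vadd x (ones n)) = K y" by (rule bwd[OF V(3) y]) (use 3 memi in auto)
        thus False using o(1) eq by simp
      qed
    qed
  next
    fix x y assume "x \<in> Vn n" "y \<in> Vn n" "(i \<in> x \<longleftrightarrow> i \<in> y) \<and> (j \<in> x \<longleftrightarrow> j \<in> y)"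
    thus "K x = K y" using bwd by blast
  qed
  show "\<forall>c<4. \<exists>x\<in>Vn n. K x = c"
  proof (intro allI impI)
    fix c :: nat assume c: "c < 4"
    have e: "{} \<in> Vn n" by (simp add: Vn_def)
    note L0 = loc'[OF e si sj sij e1[OF e] e2[OF e]]
    have o: "K (vadd {} (ones n)) \<noteq> K {}" "K (vadd {} (ones n)) \<noteq> K (vadd {} (fvec n i))"
        "K (vadd {} (ones n)) \<noteq> K (vadd {} (fvec n j))" "K (vadd {} (ones n)) < 4"
      using L0(7)[OF ones_Sset on] by auto
    have "c = K {} \<or> c = K (vadd {} (fvec n i)) \<or> c = K (vadd {} (fvec n j)) \<or> c = K (vadd {} (ones n))"
      by (rule four_cover) (use L0(1-6) o c in auto)
    moreover have "vadd {} (fvec n i) \<in> Vn n" "vadd {} (fvec n j) \<in> Vn n" "vadd {} (ones n) \<in> Vn n"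
      using VnS[OF e] si sj ones_Sset by auto
    ultimately show "\<exists>x\<in>Vn n. K x = c" using e by metis
  qed
qed

end


lemma P1: "(c::nat) mod 2 = (a + b) mod 2 \<Longrightarrow> a mod 2 = b mod 2 \<Longrightarrow> even c" by presburger
lemma P2: "(c::nat) mod 2 = (a + n) mod 2 \<Longrightarrow> even n \<Longrightarrow> c mod 2 = a mod 2" by presburger
lemma P3a: "(c::nat) mod 2 = (a + m) mod 2 \<Longrightarrow> odd m \<Longrightarrow> c mod 2 \<noteq> a mod 2"
  by presburger
lemma P3b: "even (n::nat) \<Longrightarrow> n \<ge> 1 \<Longrightarrow> odd (n - 1)"
  by presburger
lemma P3: "(c::nat) mod 2 = (a + m) mod 2 \<Longrightarrow> m = n - 1 \<Longrightarrow> even n \<Longrightarrow> n \<ge> 1 \<Longrightarrow> c mod 2 \<noteq> a mod 2"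
  using P3a P3b by blast
lemma P4: "odd (n::nat) \<Longrightarrow> (n - 1) mod 2 = 0" by presburger
lemma P5: "(a::nat) mod 2 \<noteq> b mod 2 \<Longrightarrow> c mod 2 \<noteq> a mod 2 \<Longrightarrow> c mod 2 = b mod 2" by presburger

context col begin

lemma case2:
  assumes j: "j < n"
    and H: "\<forall>x\<in>Vn n. (x, vadd x (ones n)) \<in> transition_edges n 4 K \<and>
                      (x, vadd x (fvec n j)) \<in> transition_edges n 4 K"
  shows "even n"
    and "\<forall>x\<in>Vn n. \<forall>y\<in>Vn n. K x = K y \<longleftrightarrow> (card x mod 2 = card y mod 2 \<and> (j \<in> x \<longleftrightarrow> j \<in> y))"
    and "\<forall>c<4. \<exists>x\<in>Vn n. K x = c"
proof -
  define k0 where "k0 = (if j = 0 then 1 else 0::nat)"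
  have k0: "k0 < n" "k0 \<noteq> j" using n3 by (auto simp: k0_def)
  have si: "ones n \<in> Sset n" and sj: "fvec n j \<in> Sset n" using ones_Sset fvec_Sset j by auto
  have sij: "ones n \<noteq> fvec n j" using ones_ne_fvec j by simp
  have e1: "\<And>x. x \<in> Vn n \<Longrightarrow> (x, vadd x (ones n)) \<in> transition_edges n 4 K"
   and e2: "\<And>x. x \<in> Vn n \<Longrightarrow> (x, vadd x (fvec n j)) \<in> transition_edges n 4 K" using H by auto
  have fo: "fvec n k \<in> Sset n" "fvec n k \<notin> {ones n, fvec n j}" if "k < n" "k \<noteq> j" for k
    using that fvec_Sset fvec_inj ones_ne_fvec[OF that(1)] j by auto
  have a: "K (vadd x (vadd {k} {l})) = K x"
    if x: "x \<in> Vn n" and k: "k < n" "k \<noteq> j" and l: "l < n" "l \<noteq> j" for x k l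
  proof -
    define x' where "x' = vadd (vadd x (ones n)) {k}"
    have x'V: "x' \<in> Vn n" using vadd_Vn[OF VnS[OF x ones_Sset], of "{k}"] k by (simp add: x'_def Vn_def)
    have "K (vadd x' (fvec n k)) = K (vadd x' (fvec n l))"
      using other_eq'[OF x'V si sj sij e1[OF x'V] e2[OF x'V] fo[OF k] fo[OF l]] .
    moreover have "vadd x' (fvec n k) = x" using k by (auto simp: x'_def vadd_def fvec_eq ones_def)
    moreover have "vadd x' (fvec n l) = vadd x (vadd {k} {l})"
      using l by (auto simp: x'_def vadd_def fvec_eq ones_def)
    ultimately show ?thesis by simp
  qed
  have b: "\<forall>B. card B = m \<longrightarrow> finite B \<longrightarrow> B \<subseteq> {..<n} - {j} \<longrightarrow> even m \<longrightarrow>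
              (\<forall>x\<in>Vn n. K (vadd x B) = K x)" for m
  proof (induction m rule: less_induct)
    case (less m)
    show ?case
    proof (intro allI impI ballI)
      fix B x assume cB: "card B = m" and fB: "finite B" and sB: "B \<subseteq> {..<n} - {j}" and em: "even m"
        and x: "x \<in> Vn n"
      show "K (vadd x B) = K x"
      proof (cases "B = {}")
        case True thus ?thesis by simp
      next
        case False
        then obtain k where kB: "k \<in> B" by blast
        have "card (B - {k}) = m - 1" using cB kB fB by simp
        moreover have "card B > 0" using fB kB by (auto simp: card_gt_0_iff)
        hence "m \<ge> 1" using cB by simp
        hence m2: "m \<ge> 2" using em by presburger
        ultimately have "card (B - {k}) \<noteq> 0" by simp
        hence "B - {k} \<noteq> {}" by (metis card.empty)
        then obtain l where lB: "l \<in> B" "l \<noteq> k" by blast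
        define B' where "B' = B - {k, l}"
        have cB': "card B' = m - 2" using cB kB lB fB by (simp add: B'_def card_Diff_subset)
        have lt: "m - 2 < m" using m2 by simp
        have ev: "even (m - 2)" using em m2 by simp
        have sB': "B' \<subseteq> {..<n} - {j}" using sB by (auto simp: B'_def)
        have kk: "k < n" "k \<noteq> j" "l < n" "l \<noteq> j" using sB kB lB by auto
        have xV: "vadd x (vadd {k} {l}) \<in> Vn n"
          using vadd_Vn[OF x, of "vadd {k} {l}"] kk by (auto simp: Vn_def vadd_def)
        have "vadd x B = vadd (vadd x (vadd {k} {l})) B'"
          using kB lB by (auto simp: B'_def vadd_def)
        moreover have fB': "finite B'" using fB by (simp add: B'_def)
        have IH: "\<forall>x\<in>Vn n. K (vadd x B') = K x"
          using less.IH[OF lt] cB' fB' sB' ev by blast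
        ultimately have "K (vadd x B) = K (vadd x (vadd {k} {l}))"
          using IH xV by simp
        thus ?thesis using a[OF x kk] by simp
      qed
    qed
  qed
  have bwd: "K x = K y" if x: "x \<in> Vn n" and y: "y \<in> Vn n"
     and pat: "card x mod 2 = card y mod 2 \<and> (j \<in> x \<longleftrightarrow> j \<in> y)" for x y
  proof -
    have sub: "vadd x y \<subseteq> {..<n} - {j}" using pat vadd_Vn[OF x y] by (auto simp: Vn_def vadd_def)
    have f: "finite (vadd x y)" using finite_subset[OF sub] by simp
    have "card (vadd x y) mod 2 = (card x + card y) mod 2"
      using card_vadd_mod Vn_finite x y by blast
    hence "even (card (vadd x y))" using pat P1 by blast
    hence "K (vadd x (vadd x y)) = K x" using b f sub x by blast
    thus ?thesis by simp
  qed
  have memj: "\<And>x. j \<in> vadd x (ones n) \<longleftrightarrow> j \<notin> x" "\<And>x. j \<in> vadd x (fvec n j) \<longleftrightarrow> j \<in> x"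
     "\<And>x. j \<in> vadd x (fvec n k0) \<longleftrightarrow> j \<notin> x"
    using j k0 by (auto simp: mem_vadd fvec_eq ones_def)
  have fo0: "fvec n k0 \<in> Sset n" "fvec n k0 \<notin> {ones n, fvec n j}" using fo[OF k0] .
  have cf: "card (ones n) = n" "card (fvec n j) = n - 1" "card (fvec n k0) = n - 1"
    using card_ones card_fvec j k0 by auto
  have finS: "finite (ones n)" "finite (fvec n j)" "finite (fvec n k0)"
    by (auto simp: ones_def fvec_def vadd_def evec_def)
  have e: "{} \<in> Vn n" by (simp add: Vn_def)
  note L0 = loc'[OF e si sj sij e1[OF e] e2[OF e]]
  show ev: "even n"
  proof (rule ccontr)
    assume "odd n"
    have "K {} = K (fvec n j)"
      by (rule bwd[OF e]) (use VnS[OF e sj] P4[OF \<open>odd n\<close>] cf j in \<open>auto simp: fvec_eq\<close>)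
    thus False using L0(2) by simp
  qed
  have pm: "\<And>x. x \<in> Vn n \<Longrightarrow> card (vadd x (ones n)) mod 2 = card x mod 2"
     "\<And>x. x \<in> Vn n \<Longrightarrow> card (vadd x (fvec n j)) mod 2 \<noteq> card x mod 2"
     "\<And>x. x \<in> Vn n \<Longrightarrow> card (vadd x (fvec n k0)) mod 2 \<noteq> card x mod 2"
  proof -
    fix x assume x: "x \<in> Vn n"
    have fx: "finite x" using Vn_finite x .
    have n1: "n \<ge> 1" using n3 by simp
    show "card (vadd x (ones n)) mod 2 = card x mod 2"
      using P2[OF card_vadd_mod[OF fx finS(1)]] cf ev by simp
    show "card (vadd x (fvec n j)) mod 2 \<noteq> card x mod 2"
      using P3[OF card_vadd_mod[OF fx finS(2)] cf(2) ev n1] .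
    show "card (vadd x (fvec n k0)) mod 2 \<noteq> card x mod 2"
      using P3[OF card_vadd_mod[OF fx finS(3)] cf(3) ev n1] .
  qed
  show "\<forall>x\<in>Vn n. \<forall>y\<in>Vn n. K x = K y \<longleftrightarrow> (card x mod 2 = card y mod 2 \<and> (j \<in> x \<longleftrightarrow> j \<in> y))"
  proof (intro ballI iffI)
    fix x y assume x: "x \<in> Vn n" and y: "y \<in> Vn n" and eq: "K x = K y"
    note Lx = loc'[OF x si sj sij e1[OF x] e2[OF x]]
    have o: "K (vadd x (fvec n k0)) \<noteq> K x"
      using Lx(7)[OF fo0] by auto
    have V: "vadd x (ones n) \<in> Vn n" "vadd x (fvec n j) \<in> Vn n" "vadd x (fvec n k0) \<in> Vn n"
      using VnS[OF x] si sj fo0 by auto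
    note pmx = pm[OF x]
    show "card x mod 2 = card y mod 2 \<and> (j \<in> x \<longleftrightarrow> j \<in> y)"
    proof (rule ccontr)
      assume np: "\<not> ?thesis"
      consider "card x mod 2 = card y mod 2" "\<not> (j \<in> x \<longleftrightarrow> j \<in> y)"
        | "card x mod 2 \<noteq> card y mod 2" "(j \<in> x \<longleftrightarrow> j \<in> y)"
        | "card x mod 2 \<noteq> card y mod 2" "\<not> (j \<in> x \<longleftrightarrow> j \<in> y)" using np by blast
      thus False
      proof cases
        case 1
        have "K (vadd x (ones n)) = K y" by (rule bwd[OF V(1) y]) (use 1 memj pmx in auto)
        thus False using Lx(1) eq by simp
      next
        case 2
        have "K (vadd x (fvec n j)) = K y" by (rule bwd[OF V(2) y]) (use 2 memj pmx P5[of "card x" "card y" "card (vadd x (fvec n j))"] in auto)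
        thus False using Lx(2) eq by simp
      next
        case 3
        have "K (vadd x (fvec n k0)) = K y" by (rule bwd[OF V(3) y]) (use 3 memj pmx P5[of "card x" "card y" "card (vadd x (fvec n k0))"] in auto)
        thus False using o eq by simp
      qed
    qed
  next
    fix x y assume "x \<in> Vn n" "y \<in> Vn n" "card x mod 2 = card y mod 2 \<and> (j \<in> x \<longleftrightarrow> j \<in> y)"
    thus "K x = K y" using bwd by blast
  qed
  show "\<forall>c<4. \<exists>x\<in>Vn n. K x = c"
  proof (intro allI impI)
    fix c :: nat assume c: "c < 4"
    have o: "K (vadd {} (fvec n k0)) \<noteq> K {}" "K (vadd {} (fvec n k0)) \<noteq> K (vadd {} (ones n))"
        "K (vadd {} (fvec n k0)) \<noteq> K (vadd {} (fvec n j))" "K (vadd {} (fvec n k0)) < 4"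
      using L0(7)[OF fo0] by auto
    have "c = K {} \<or> c = K (vadd {} (ones n)) \<or> c = K (vadd {} (fvec n j)) \<or> c = K (vadd {} (fvec n k0))"
      by (rule four_cover) (use L0(1-6) o c in auto)
    moreover have "vadd {} (ones n) \<in> Vn n" "vadd {} (fvec n j) \<in> Vn n" "vadd {} (fvec n k0) \<in> Vn n"
      using VnS[OF e] si sj fo0 by auto
    ultimately show "\<exists>x\<in>Vn n. K x = c" using e by metis
  qed
qed

end


lemma mod2_add: "(a::nat) mod 2 = b mod 2 \<Longrightarrow> (a + c) mod 2 = (b + c) mod 2"
  by presburger

lemma even_from:
  assumes used: "\<forall>c<4. \<exists>x\<in>Vn n. K x = c"
    and comp: "\<forall>v\<in>Vn n. \<forall>x\<in>Vn n. \<forall>y\<in>Vn n. K x = K y \<longrightarrow> K (vadd x v) = K (vadd y v)"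
  shows "even_coloring n 4 K"
  unfolding even_coloring_def
proof (intro allI impI)
  fix c d :: nat assume c: "c < 4" and d: "d < 4"
  obtain x where x: "x \<in> Vn n" "K x = c" using used c by blast
  obtain y where y: "y \<in> Vn n" "K y = d" using used d by blast
  define v where "v = vadd x y"
  have v: "v \<in> Vn n" using vadd_Vn[OF x(1) y(1)] v_def by simp
  have xv: "vadd x v = y" "vadd y v = x" by (auto simp: v_def vadd_def)
  have "bij_betw (\<lambda>z. vadd z v) (color_class n K c) (color_class n K d)"
  proof (rule bij_betw_byWitness[where f' = "\<lambda>z. vadd z v"])
    show "\<forall>a\<in>color_class n K c. vadd (vadd a v) v = a" by simp
    show "\<forall>a\<in>color_class n K d. vadd (vadd a v) v = a" by simp
    show "(\<lambda>z. vadd z v) ` color_class n K c \<subseteq> color_class n K d"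
    proof
      fix w assume "w \<in> (\<lambda>z. vadd z v) ` color_class n K c"
      then obtain z where z: "z \<in> Vn n" "K z = c" "w = vadd z v" by (auto simp: color_class_def)
      have "K (vadd z v) = K (vadd x v)" using comp v z x by metis
      thus "w \<in> color_class n K d" using z xv y vadd_Vn[OF z(1) v] by (simp add: color_class_def)
    qed
    show "(\<lambda>z. vadd z v) ` color_class n K d \<subseteq> color_class n K c"
    proof
      fix w assume "w \<in> (\<lambda>z. vadd z v) ` color_class n K d"
      then obtain z where z: "z \<in> Vn n" "K z = d" "w = vadd z v" by (auto simp: color_class_def)
      have "K (vadd z v) = K (vadd y v)" using comp v z y by metis
      thus "w \<in> color_class n K c" using z xv x vadd_Vn[OF z(1) v] by (simp add: color_class_def)
    qed
  qed
  thus "card (color_class n K c) = card (color_class n K d)" by (rule bij_betw_same_card)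
qed

lemma classes_from:
  assumes pc: "proper_coloring n 4 K"
    and eqv: "\<forall>x\<in>Vn n. \<forall>y\<in>Vn n. K x = K y \<longleftrightarrow> R x y"
    and used: "\<forall>c<4. \<exists>x\<in>Vn n. K x = c"
  shows "color_classes n 4 K = {{y \<in> Vn n. R x y} | x. x \<in> Vn n}"
proof
  show "color_classes n 4 K \<subseteq> {{y \<in> Vn n. R x y} | x. x \<in> Vn n}"
  proof
    fix A assume "A \<in> color_classes n 4 K"
    then obtain c where c: "c < 4" "A = color_class n K c" by (auto simp: color_classes_def)
    obtain x where x: "x \<in> Vn n" "K x = c" using used c by blast
    have key: "\<forall>y\<in>Vn n. K y = K x \<longleftrightarrow> R x y" using eqv x(1) by metis
    have "A = {y \<in> Vn n. R x y}" using c x key by (auto simp: color_class_def)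
    thus "A \<in> {{y \<in> Vn n. R x y} | x. x \<in> Vn n}" using x by blast
  qed
  show "{{y \<in> Vn n. R x y} | x. x \<in> Vn n} \<subseteq> color_classes n 4 K"
  proof
    fix A assume "A \<in> {{y \<in> Vn n. R x y} | x. x \<in> Vn n}"
    then obtain x where x: "x \<in> Vn n" "A = {y \<in> Vn n. R x y}" by blast
    have "K x < 4" using pc x(1) by (auto simp: proper_coloring_def)
    moreover have key: "\<forall>y\<in>Vn n. K y = K x \<longleftrightarrow> R x y" using eqv x(1) by metis
    moreover have "A = color_class n K (K x)" using x key by (auto simp: color_class_def)
    ultimately show "A \<in> color_classes n 4 K" by (auto simp: color_classes_def)
  qed
qed

lemma sets1:
  assumes i: "i < n" and j: "j < n" and ij: "i \<noteq> j"
  shows "{{y \<in> Vn n. (i \<in> x \<longleftrightarrow> i \<in> y) \<and> (j \<in> x \<longleftrightarrow> j \<in> y)} | x. x \<in> Vn n}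
       = {{x \<in> Vn n. (i \<in> x \<longleftrightarrow> a) \<and> (j \<in> x \<longleftrightarrow> b)} | a b. True}"
proof
  show "{{y \<in> Vn n. (i \<in> x \<longleftrightarrow> i \<in> y) \<and> (j \<in> x \<longleftrightarrow> j \<in> y)} | x. x \<in> Vn n}
       \<subseteq> {{x \<in> Vn n. (i \<in> x \<longleftrightarrow> a) \<and> (j \<in> x \<longleftrightarrow> b)} | a b. True}"
  proof
    fix A assume "A \<in> {{y \<in> Vn n. (i \<in> x \<longleftrightarrow> i \<in> y) \<and> (j \<in> x \<longleftrightarrow> j \<in> y)} | x. x \<in> Vn n}"
    then obtain x where x: "A = {y \<in> Vn n. (i \<in> x \<longleftrightarrow> i \<in> y) \<and> (j \<in> x \<longleftrightarrow> j \<in> y)}" by blast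
    hence "A = {y \<in> Vn n. (i \<in> y \<longleftrightarrow> i \<in> x) \<and> (j \<in> y \<longleftrightarrow> j \<in> x)}" by blast
    thus "A \<in> {{x \<in> Vn n. (i \<in> x \<longleftrightarrow> a) \<and> (j \<in> x \<longleftrightarrow> b)} | a b. True}" by blast
  qed
  show "{{x \<in> Vn n. (i \<in> x \<longleftrightarrow> a) \<and> (j \<in> x \<longleftrightarrow> b)} | a b. True} \<subseteq>
        {{y \<in> Vn n. (i \<in> x \<longleftrightarrow> i \<in> y) \<and> (j \<in> x \<longleftrightarrow> j \<in> y)} | x. x \<in> Vn n}"
  proof
    fix A assume "A \<in> {{x \<in> Vn n. (i \<in> x \<longleftrightarrow> a) \<and> (j \<in> x \<longleftrightarrow> b)} | a b. True}"
    then obtain a b where A: "A = {x \<in> Vn n. (i \<in> x \<longleftrightarrow> a) \<and> (j \<in> x \<longleftrightarrow> b)}" by blast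
    define x0 where "x0 = (if a then {i} else {}) \<union> (if b then {j} else {})"
    have x0: "x0 \<in> Vn n" using i j by (auto simp: x0_def Vn_def)
    have m: "i \<in> x0 \<longleftrightarrow> a" "j \<in> x0 \<longleftrightarrow> b" using ij by (auto simp: x0_def)
    have "A = {y \<in> Vn n. (i \<in> x0 \<longleftrightarrow> i \<in> y) \<and> (j \<in> x0 \<longleftrightarrow> j \<in> y)}" using A m by blast
    thus "A \<in> {{y \<in> Vn n. (i \<in> x \<longleftrightarrow> i \<in> y) \<and> (j \<in> x \<longleftrightarrow> j \<in> y)} | x. x \<in> Vn n}" using x0 by blast
  qed
qed

lemma sets2:
  assumes j: "j < n" and n3: "n \<ge> 3"
  shows "{{y \<in> Vn n. card x mod 2 = card y mod 2 \<and> (j \<in> x \<longleftrightarrow> j \<in> y)} | x. x \<in> Vn n}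
       = {{v \<in> Vn n. wt v mod 2 = \<nu> \<and> (j \<in> v \<longleftrightarrow> \<mu>)} | \<nu> \<mu>. \<nu> < (2::nat)}"
proof
  show "{{y \<in> Vn n. card x mod 2 = card y mod 2 \<and> (j \<in> x \<longleftrightarrow> j \<in> y)} | x. x \<in> Vn n}
       \<subseteq> {{v \<in> Vn n. wt v mod 2 = \<nu> \<and> (j \<in> v \<longleftrightarrow> \<mu>)} | \<nu> \<mu>. \<nu> < (2::nat)}"
  proof
    fix A assume "A \<in> {{y \<in> Vn n. card x mod 2 = card y mod 2 \<and> (j \<in> x \<longleftrightarrow> j \<in> y)} | x. x \<in> Vn n}"
    then obtain x where x: "A = {y \<in> Vn n. card x mod 2 = card y mod 2 \<and> (j \<in> x \<longleftrightarrow> j \<in> y)}" by blast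
    hence "A = {v \<in> Vn n. wt v mod 2 = card x mod 2 \<and> (j \<in> v \<longleftrightarrow> j \<in> x)}" by (auto simp: wt_def)
    moreover have "card x mod 2 < 2" by simp
    ultimately show "A \<in> {{v \<in> Vn n. wt v mod 2 = \<nu> \<and> (j \<in> v \<longleftrightarrow> \<mu>)} | \<nu> \<mu>. \<nu> < (2::nat)}" by blast
  qed
  show "{{v \<in> Vn n. wt v mod 2 = \<nu> \<and> (j \<in> v \<longleftrightarrow> \<mu>)} | \<nu> \<mu>. \<nu> < (2::nat)} \<subseteq>
        {{y \<in> Vn n. card x mod 2 = card y mod 2 \<and> (j \<in> x \<longleftrightarrow> j \<in> y)} | x. x \<in> Vn n}"
  proof
    fix A assume "A \<in> {{v \<in> Vn n. wt v mod 2 = \<nu> \<and> (j \<in> v \<longleftrightarrow> \<mu>)} | \<nu> \<mu>. \<nu> < (2::nat)}"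
    then obtain \<nu> \<mu> where A: "A = {v \<in> Vn n. wt v mod 2 = \<nu> \<and> (j \<in> v \<longleftrightarrow> \<mu>)}" and nu: "\<nu> < (2::nat)" by blast
    define k0 where "k0 = (if j = 0 then 1 else 0::nat)"
    have k0: "k0 < n" "k0 \<noteq> j" using n3 by (auto simp: k0_def)
    define x0 where "x0 = (if \<mu> then {j} else {}) \<union> (if (\<nu> = 1) \<noteq> \<mu> then {k0} else {})"
    have x0: "x0 \<in> Vn n" using j k0 by (auto simp: x0_def Vn_def)
    have m: "j \<in> x0 \<longleftrightarrow> \<mu>" using k0 by (auto simp: x0_def)
    have c: "card x0 mod 2 = \<nu>"
    proof (cases \<mu>)
      case True
      thus ?thesis using nu k0 by (cases "\<nu> = 1") (auto simp: x0_def)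
    next
      case False
      thus ?thesis using nu k0 by (cases "\<nu> = 1") (auto simp: x0_def)
    qed
    have "A = {y \<in> Vn n. card x0 mod 2 = card y mod 2 \<and> (j \<in> x0 \<longleftrightarrow> j \<in> y)}"
      using A m c by (auto simp: wt_def)
    thus "A \<in> {{y \<in> Vn n. card x mod 2 = card y mod 2 \<and> (j \<in> x \<longleftrightarrow> j \<in> y)} | x. x \<in> Vn n}" using x0 by blast
  qed
qed



context col begin

lemma card_Vn: "card (Vn n) = 2 ^ n" by (simp add: Vn_def card_Pow)

lemma rb_all2:
  assumes r: "rb n 4 K = 2 / (real n + 1)"
  shows "\<forall>x\<in>Vn n. card (Tn n K x) = 2"
proof -
  have finNb: "\<forall>x\<in>Vn n. finite (Nb n x)"
    using Nb_eq[OF n2] finite_Sset by simp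
  have E: "edges n = Sigma (Vn n) (Nb n)" using edges_Vn by (auto simp: Nb_def)
  have cE: "card (edges n) = 2 ^ n * (n + 1)"
  proof -
    have "card (edges n) = (\<Sum>x\<in>Vn n. card (Nb n x))" unfolding E
      by (rule card_SigmaI[OF finite_Vn]) (use finNb in auto)
    also have "\<dots> = (\<Sum>x\<in>Vn n. n + 1)" using card_Nb[OF n2] by simp
    finally show ?thesis using card_Vn by simp
  qed
  have T: "transition_edges n 4 K = Sigma (Vn n) (Tn n K)"
    using edges_Vn T_edge by (fastforce simp: Tn_def)
  have finT: "\<forall>x\<in>Vn n. finite (Tn n K x)" using finNb Tn_sub finite_subset by blast
  have cT: "card (transition_edges n 4 K) = (\<Sum>x\<in>Vn n. card (Tn n K x))" unfolding T
    by (rule card_SigmaI[OF finite_Vn]) (use finT in auto)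
  have "card (edges n) > 0" using cE by simp
  hence pos: "real (card (edges n)) > 0" by simp
  have "real (card (transition_edges n 4 K)) = 2 / (real n + 1) * real (card (edges n))"
    using r pos unfolding rb_def by (simp add: divide_eq_eq)
  also have "\<dots> = 2 * 2 ^ n" using cE by (simp add: field_simps)
  finally have "card (transition_edges n 4 K) = 2 * 2 ^ n"
    by (metis of_nat_eq_iff of_nat_mult of_nat_numeral of_nat_power)
  hence S: "(\<Sum>x\<in>Vn n. card (Tn n K x)) = (\<Sum>x\<in>Vn n. 2)" using cT card_Vn by simp
  show ?thesis
  proof (rule ccontr)
    assume "\<not> ?thesis"
    then obtain x where x: "x \<in> Vn n" "card (Tn n K x) \<noteq> 2" by blast
    have "(\<Sum>x\<in>Vn n. card (Tn n K x)) < (\<Sum>x\<in>Vn n. 2)"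
    proof (rule sum_strict_mono_ex1[OF finite_Vn])
      show "\<forall>x\<in>Vn n. card (Tn n K x) \<le> 2" using deg_le2 by blast
      show "\<exists>a\<in>Vn n. card (Tn n K a) < 2" using x deg_le2[OF x(1)] by force
    qed
    thus False using S by simp
  qed
qed

lemma part3:
  assumes r: "rb n 4 K = 2 / (real n + 1)"
  shows "even_coloring n 4 K"
proof -
  note H = rb_all2[OF r]
  have e: "{} \<in> Vn n" by (simp add: Vn_def)
  obtain y1 y2 where y: "y1 \<noteq> y2" "Tn n K {} = {y1, y2}"
    using H e by (meson card_2_iff)
  have ys: "y1 \<in> Sset n" "y2 \<in> Sset n"
  proof -
    have "y1 \<in> Tn n K {}" "y2 \<in> Tn n K {}" using y(2) by auto
    hence "({}, y1) \<in> transition_edges n 4 K" "({}, y2) \<in> transition_edges n 4 K" by (auto simp: Tn_def)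
    hence "({}, y1) \<in> edges n" "({}, y2) \<in> edges n" using T_edge by auto
    thus "y1 \<in> Sset n" "y2 \<in> Sset n" using edges_iff[OF n2] by auto
  qed
  have T0: "Tn n K {} = {vadd {} y1, vadd {} y2}" using y by simp
  have all: "\<forall>x\<in>Vn n. Tn n K x = {vadd x y1, vadd x y2}" using const_T[OF H e ys y(1) T0] .
  have m1: "\<forall>x\<in>Vn n. (x, vadd x y1) \<in> transition_edges n 4 K \<and> (x, vadd x y2) \<in> transition_edges n 4 K"
    using all by (auto simp: Tn_def)
  have m2: "\<forall>x\<in>Vn n. (x, vadd x y2) \<in> transition_edges n 4 K \<and> (x, vadd x y1) \<in> transition_edges n 4 K"
    using m1 by blast
  have comp1: "\<forall>v\<in>Vn n. \<forall>x\<in>Vn n. \<forall>y\<in>Vn n. K x = K y \<longrightarrow> K (vadd x v) = K (vadd y v)"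
    if eqv: "\<forall>x\<in>Vn n. \<forall>y\<in>Vn n. K x = K y \<longleftrightarrow> ((i \<in> x \<longleftrightarrow> i \<in> y) \<and> (j \<in> x \<longleftrightarrow> j \<in> y))" for i j
  proof (intro ballI impI)
    fix v x y assume v: "v \<in> Vn n" and x: "x \<in> Vn n" and y: "y \<in> Vn n" and k: "K x = K y"
    have "(i \<in> x \<longleftrightarrow> i \<in> y) \<and> (j \<in> x \<longleftrightarrow> j \<in> y)" using eqv x y k by blast
    hence "(i \<in> vadd x v \<longleftrightarrow> i \<in> vadd y v) \<and> (j \<in> vadd x v \<longleftrightarrow> j \<in> vadd y v)"
      by (auto simp: mem_vadd)
    thus "K (vadd x v) = K (vadd y v)" using eqv vadd_Vn[OF x v] vadd_Vn[OF y v] by blast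
  qed
  have comp2: "\<forall>v\<in>Vn n. \<forall>x\<in>Vn n. \<forall>y\<in>Vn n. K x = K y \<longrightarrow> K (vadd x v) = K (vadd y v)"
    if eqv: "\<forall>x\<in>Vn n. \<forall>y\<in>Vn n. K x = K y \<longleftrightarrow> (card x mod 2 = card y mod 2 \<and> (j \<in> x \<longleftrightarrow> j \<in> y))" for j
  proof (intro ballI impI)
    fix v x y assume v: "v \<in> Vn n" and x: "x \<in> Vn n" and y: "y \<in> Vn n" and k: "K x = K y"
    have p: "card x mod 2 = card y mod 2 \<and> (j \<in> x \<longleftrightarrow> j \<in> y)" using eqv x y k by blast
    have "card (vadd x v) mod 2 = (card x + card v) mod 2"
      using card_vadd_mod Vn_finite x v by blast
    moreover have "card (vadd y v) mod 2 = (card y + card v) mod 2"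
      using card_vadd_mod Vn_finite y v by blast
    ultimately have "card (vadd x v) mod 2 = card (vadd y v) mod 2" using p mod2_add by metis
    moreover have "j \<in> vadd x v \<longleftrightarrow> j \<in> vadd y v" using p by (auto simp: mem_vadd)
    ultimately show "K (vadd x v) = K (vadd y v)" using eqv vadd_Vn[OF x v] vadd_Vn[OF y v] by blast
  qed
  have "y1 = ones n \<or> (\<exists>k<n. y1 = fvec n k)" "y2 = ones n \<or> (\<exists>k<n. y2 = fvec n k)"
    using ys by (auto simp: Sset_def)
  then consider (A) j where "j < n" "y1 = ones n" "y2 = fvec n j"
    | (B) j where "j < n" "y2 = ones n" "y1 = fvec n j"
    | (C) i j where "i < n" "j < n" "i \<noteq> j" "y1 = fvec n i" "y2 = fvec n j"
    using y(1) by metis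
  thus ?thesis
  proof cases
    case (A j)
    note c = case2[OF A(1) m1[unfolded A(2,3)]]
    show ?thesis by (rule even_from[OF c(3) comp2[OF c(2)]])
  next
    case (B j)
    note c = case2[OF B(1) m2[unfolded B(2,3)]]
    show ?thesis by (rule even_from[OF c(3) comp2[OF c(2)]])
  next
    case (C i j)
    note c = case1[OF C(1-3) m1[unfolded C(4,5)]]
    show ?thesis by (rule even_from[OF c(2) comp1[OF c(1)]])
  qed
qed

lemma part1:
  assumes i: "i < j" "j < n"
    and T: "transition_edges n 4 K =
              {(x, y). x \<in> Vn n \<and> y \<in> Vn n \<and> vadd x y \<in> {fvec n i, fvec n j}}"
  shows "color_classes n 4 K =
              {{x \<in> Vn n. (i \<in> x \<longleftrightarrow> a) \<and> (j \<in> x \<longleftrightarrow> b)} | a b. True}"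
proof -
  have ij: "i < n" "j < n" "i \<noteq> j" using i by auto
  have m: "\<forall>x\<in>Vn n. (x, vadd x (fvec n i)) \<in> transition_edges n 4 K \<and>
                      (x, vadd x (fvec n j)) \<in> transition_edges n 4 K"
    unfolding T using VnS fvec_Sset ij by auto
  note c = case1[OF ij m]
  show ?thesis using classes_from[OF pc c(1) c(2)] sets1[OF ij] by simp
qed

lemma part2:
  assumes j: "j < n"
    and T: "transition_edges n 4 K =
              {(x, y). x \<in> Vn n \<and> y \<in> Vn n \<and> vadd x y \<in> {ones n, fvec n j}}"
  shows "even n \<and> color_classes n 4 K =
              {{v \<in> Vn n. wt v mod 2 = \<nu> \<and> (j \<in> v \<longleftrightarrow> \<mu>)} | \<nu> \<mu>. \<nu> < (2::nat)}"
proof -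
  have m: "\<forall>x\<in>Vn n. (x, vadd x (ones n)) \<in> transition_edges n 4 K \<and>
                      (x, vadd x (fvec n j)) \<in> transition_edges n 4 K"
    unfolding T using VnS fvec_Sset ones_Sset j by auto
  note c = case2[OF j m]
  show ?thesis using c(1) classes_from[OF pc c(2) c(3)] sets2[OF j n3] by simp
qed

end

theorem theorem5p3:
  fixes n :: nat and K :: "nat set \<Rightarrow> nat"
  assumes "n \<ge> 3"
    and "proper_coloring n 4 K"
  shows "(\<forall>i j. i < j \<and> j < n \<and>
            transition_edges n 4 K =
              {(x, y). x \<in> Vn n \<and> y \<in> Vn n \<and> vadd x y \<in> {fvec n i, fvec n j}}
          \<longrightarrow> color_classes n 4 K =
              {{x \<in> Vn n. (i \<in> x \<longleftrightarrow> a) \<and> (j \<in> x \<longleftrightarrow> b)} | a b. True})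
       \<and> (\<forall>j. j < n \<and>
            transition_edges n 4 K =
              {(x, y). x \<in> Vn n \<and> y \<in> Vn n \<and> vadd x y \<in> {ones n, fvec n j}}
          \<longrightarrow> even n \<and> color_classes n 4 K =
              {{v \<in> Vn n. wt v mod 2 = \<nu> \<and> (j \<in> v \<longleftrightarrow> \<mu>)} | \<nu> \<mu>. \<nu> < (2::nat)})
       \<and> (rb n 4 K = 2 / (real n + 1) \<longrightarrow> even_coloring n 4 K)"
proof -
  interpret col n K using assms by unfold_locales
  show ?thesis
    apply (rule conjI)
     apply (intro allI impI, elim conjE, rule part1, assumption+)
    apply (rule conjI)
     apply (intro allI impI, elim conjE, rule part2, assumption+)
    apply (intro impI, rule part3, assumption)
    done
qed



end
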